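(* Let $\chi:VB_n\to M_n$ be the homomorphism with $\chi(\sigma_i)=s_i$, $\chi(\rho_i)=t_i$ ($i=1,\dots,n-1$), and let $\eta_1,\eta_2:M_n\to S_n$ be the homomorphisms with $\eta_1(s_i)=1$, $\eta_1(t_i)=(i\ i{+}1)$, and $\eta_2(s_i)=\eta_2(t_i)=(i\ i{+}1)$. Then: (i) $H_n=\ker(\eta_1\circ\chi)$; (ii) $VP_n=\ker(\eta_2\circ\chi)$; (iii) $H_n\cap VP_n=\ker\chi$.
   Context: The virtual braid group $VB_n$ is the group with generators $\sigma_i,\rho_i$ ($i=1,\dots,n-1$) and defining relations: $\sigma_i\sigma_{i+1}\sigma_i=\sigma_{i+1}\sigma_i\sigma_{i+1}$ ($1\le i\le n-2$); $\sigma_i\sigma_j=\sigma_j\sigma_i$ ($|i-j|\geq 2$); $\rho_i\rho_{i+1}\rho_i=\rho_{i+1}\rho_i\rho_{i+1}$ ($1\le i\le n-2$); $\rho_i\rho_j=\rho_j\rho_i$ ($|i-j|\geq 2$); $\rho_i^2=1$; $\sigma_i\rho_j=\rho_j\sigma_i$ ($|i-j|\geq2$); $\rho_i\rho_{i+1}\sigma_i=\sigma_{i+1}\rho_i\rho_{i+1}$ ($1\le i\le n-2$). $M_n=S_n\rtimes S_n$, where the second factor acts on the first by conjugation; $s_i$ is the transposition $(i\ i{+}1)$ in the first factor and $t_i$ the transposition $(i\ i{+}1)$ in the second factor. $H_n$ is the normal closure of $\langle\sigma_1,\dots,\sigma_{n-1}\rangle$ in $VB_n$. $VP_n$ is the kernel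 of $\nu:VB_n\to S_n$, $\nu(\sigma_i)=\nu(\rho_i)=(i\ i{+}1)$. The kernel $\ker\chi$ is called the extended pure braid group $EP_n$. *)

theory Defs
  imports "HOL-Algebra.Sym_Groups"
begin

datatype vgen = Sig nat | Rho nat

text \<open>A letter is a generator together with an exponent flag: (False, g) is g, (True, g) is g^-1.\<close>
type_synonym vletter = "bool \<times> vgen"
type_synonym vword = "vletter list"

definition vb_letters :: "nat \<Rightarrow> vletter set" where
  "vb_letters n = {(e, g) | e g i. (g = Sig i \<or> g = Rho i) \<and> 1 \<le> i \<and> i < n}"

fun linv :: "vletter \<Rightarrow> vletter" where
  "linv (e, g) = (\<not> e, g)"

abbreviation sg :: "nat \<Rightarrow> vword" where "sg i \<equiv> [(False, Sig i)]"
abbreviation rh :: "nat \<Rightarrow> vword" where "rh i \<equiv> [(False, Rho i)]"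

definition vb_relators :: "nat \<Rightarrow> (vword \<times> vword) set" where
  "vb_relators n =
     {(sg i @ sg (i+1) @ sg i, sg (i+1) @ sg i @ sg (i+1)) | i. 1 \<le> i \<and> i + 1 < n}
   \<union> {(sg i @ sg j, sg j @ sg i) | i j. 1 \<le> i \<and> i < n \<and> 1 \<le> j \<and> j < n \<and> (i + 2 \<le> j \<or> j + 2 \<le> i)}
   \<union> {(rh i @ rh (i+1) @ rh i, rh (i+1) @ rh i @ rh (i+1)) | i. 1 \<le> i \<and> i + 1 < n}
   \<union> {(rh i @ rh j, rh j @ rh i) | i j. 1 \<le> i \<and> i < n \<and> 1 \<le> j \<and> j < n \<and> (i + 2 \<le> j \<or> j + 2 \<le> i)}
   \<union> {(rh i @ rh i, []) | i. 1 \<le> i \<and> i < n}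
   \<union> {(sg i @ rh j, rh j @ sg i) | i j. 1 \<le> i \<and> i < n \<and> 1 \<le> j \<and> j < n \<and> (i + 2 \<le> j \<or> j + 2 \<le> i)}
   \<union> {(rh i @ rh (i+1) @ sg i, sg (i+1) @ rh i @ rh (i+1)) | i. 1 \<le> i \<and> i + 1 < n}"

inductive vb_eq :: "nat \<Rightarrow> vword \<Rightarrow> vword \<Rightarrow> bool" for n where
  rel: "(l, r) \<in> vb_relators n \<Longrightarrow> u \<in> lists (vb_letters n) \<Longrightarrow> v \<in> lists (vb_letters n)
        \<Longrightarrow> vb_eq n (u @ l @ v) (u @ r @ v)"
| cancel: "a \<in> vb_letters n \<Longrightarrow> u \<in> lists (vb_letters n) \<Longrightarrow> v \<in> lists (vb_letters n)
        \<Longrightarrow> vb_eq n (u @ [a, linv a] @ v) (u @ v)"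
| refl: "w \<in> lists (vb_letters n) \<Longrightarrow> vb_eq n w w"
| sym: "vb_eq n w w' \<Longrightarrow> vb_eq n w' w"
| trans: "vb_eq n w w' \<Longrightarrow> vb_eq n w' w'' \<Longrightarrow> vb_eq n w w''"

definition vb_class :: "nat \<Rightarrow> vword \<Rightarrow> vword set" where
  "vb_class n w = {w'. vb_eq n w w'}"

definition rep :: "vword set \<Rightarrow> vword" where
  "rep X = (SOME w. w \<in> X)"

definition VB :: "nat \<Rightarrow> vword set monoid" where
  "VB n = \<lparr> carrier = vb_class n ` lists (vb_letters n),
            mult = (\<lambda>X Y. vb_class n (rep X @ rep Y)),
            one = vb_class n [] \<rparr>"

definition vsigma :: "nat \<Rightarrow> nat \<Rightarrow> vword set" where
  "vsigma n i = vb_class n (sg i)"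

definition normal_closure :: "('a, 'm) monoid_scheme \<Rightarrow> 'a set \<Rightarrow> 'a set" where
  "normal_closure G S = \<Inter> {N. N \<lhd> G \<and> S \<subseteq> N}"

definition H_sub :: "nat \<Rightarrow> vword set set" where
  "H_sub n = normal_closure (VB n) {vsigma n i | i. 1 \<le> i \<and> i < n}"

definition word_eval :: "('a, 'm) monoid_scheme \<Rightarrow> (vgen \<Rightarrow> 'a) \<Rightarrow> vword \<Rightarrow> 'a" where
  "word_eval G f w = foldr (\<lambda>(e, g) acc. mult G (if e then m_inv G (f g) else f g) acc) w (one G)"

definition hom_from_gens :: "nat \<Rightarrow> ('a, 'm) monoid_scheme \<Rightarrow> (vgen \<Rightarrow> 'a) \<Rightarrow> vword set \<Rightarrow> 'a" where
  "hom_from_gens n G f X = word_eval G f (rep X)"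

abbreviation tr :: "nat \<Rightarrow> nat \<Rightarrow> nat" where "tr i \<equiv> Transposition.transpose i (i + 1)"

text \<open>M_n = S_n \<rtimes> S_n, second factor acting on the first by conjugation:
  (a, b) (c, d) = (a (b c b^-1), b d).\<close>
definition M :: "nat \<Rightarrow> ((nat \<Rightarrow> nat) \<times> (nat \<Rightarrow> nat)) monoid" where
  "M n = \<lparr> carrier = {(a, b). a permutes {1..n} \<and> b permutes {1..n}},
           mult = (\<lambda>(a, b) (c, d). (a \<circ> (b \<circ> c \<circ> Hilbert_Choice.inv b), b \<circ> d)),
           one = (id, id) \<rparr>"

definition s_el :: "nat \<Rightarrow> (nat \<Rightarrow> nat) \<times> (nat \<Rightarrow> nat)" where "s_el i = (tr i, id)"
definition t_el :: "nat \<Rightarrow> (nat \<Rightarrow> nat) \<times> (nat \<Rightarrow> nat)" where "t_el i = (id, tr i)"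

fun chi_gen :: "vgen \<Rightarrow> (nat \<Rightarrow> nat) \<times> (nat \<Rightarrow> nat)" where
  "chi_gen (Sig i) = s_el i"
| "chi_gen (Rho i) = t_el i"

fun nu_gen :: "vgen \<Rightarrow> nat \<Rightarrow> nat" where
  "nu_gen (Sig i) = tr i"
| "nu_gen (Rho i) = tr i"

definition chi :: "nat \<Rightarrow> vword set \<Rightarrow> (nat \<Rightarrow> nat) \<times> (nat \<Rightarrow> nat)" where
  "chi n = hom_from_gens n (M n) chi_gen"

definition nu :: "nat \<Rightarrow> vword set \<Rightarrow> nat \<Rightarrow> nat" where
  "nu n = hom_from_gens n (sym_group n) nu_gen"

text \<open>eta1(s_i) = 1, eta1(t_i) = (i i+1): projection to the second factor.
  eta2(s_i) = eta2(t_i) = (i i+1): (a, b) \<mapsto> a b.\<close>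
definition eta1 :: "(nat \<Rightarrow> nat) \<times> (nat \<Rightarrow> nat) \<Rightarrow> nat \<Rightarrow> nat" where
  "eta1 = (\<lambda>(a, b). b)"
definition eta2 :: "(nat \<Rightarrow> nat) \<times> (nat \<Rightarrow> nat) \<Rightarrow> nat \<Rightarrow> nat" where
  "eta2 = (\<lambda>(a, b). a \<circ> b)"

definition VP :: "nat \<Rightarrow> vword set set" where
  "VP n = kernel (VB n) (sym_group n) (nu n)"

end

theory Submission
  imports Defs
begin


lemma sig_letter: "1 \<le> i \<Longrightarrow> i < n \<Longrightarrow> (e, Sig i) \<in> vb_letters n"
  unfolding vb_letters_def by blast
lemma rho_letter: "1 \<le> i \<Longrightarrow> i < n \<Longrightarrow> (e, Rho i) \<in> vb_letters n"
  unfolding vb_letters_def by blast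

lemma relator_lists: "(l, r) \<in> vb_relators n \<Longrightarrow> l \<in> lists (vb_letters n) \<and> r \<in> lists (vb_letters n)"
  unfolding vb_relators_def
  by (elim UnE; clarsimp simp del: One_nat_def; auto intro!: sig_letter rho_letter simp del: One_nat_def)

lemma vb_eq_lists: "vb_eq n u v \<Longrightarrow> u \<in> lists (vb_letters n) \<and> v \<in> lists (vb_letters n)"
proof (induction rule: vb_eq.induct)
  case (rel l r u v)
  then show ?case using relator_lists by auto
next
  case (cancel a u v)
  then show ?case by (cases a) (auto simp: vb_letters_def)
qed auto

lemma vb_eq_app_right: "vb_eq n u u' \<Longrightarrow> v \<in> lists (vb_letters n) \<Longrightarrow> vb_eq n (u @ v) (u' @ v)"
proof (induction rule: vb_eq.induct)
  case (rel l r u w)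
  then show ?case using vb_eq.rel[of l r n u "w @ v"] by auto
next
  case (cancel a u w)
  then show ?case using vb_eq.cancel[of a n u "w @ v"] by auto
next
  case (refl w) then show ?case using vb_eq.refl[of "w @ v" n] by auto
next
  case (sym w w') then have "vb_eq n (w @ v) (w' @ v)" by simp
  then show ?case by (rule vb_eq.sym)
next
  case (trans w w' w'') then have "vb_eq n (w @ v) (w' @ v)" "vb_eq n (w' @ v) (w'' @ v)" by simp_all
  then show ?case by (rule vb_eq.trans)
qed

lemma vb_eq_app_left: "vb_eq n u u' \<Longrightarrow> v \<in> lists (vb_letters n) \<Longrightarrow> vb_eq n (v @ u) (v @ u')"
proof (induction rule: vb_eq.induct)
  case (rel l r u w)
  then show ?case using vb_eq.rel[of l r n "v @ u" w] by auto
next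
  case (cancel a u w)
  then show ?case using vb_eq.cancel[of a n "v @ u" w] by auto
next
  case (refl w) then show ?case using vb_eq.refl[of "v @ w" n] by auto
next
  case (sym w w') then have "vb_eq n (v @ w) (v @ w')" by simp
  then show ?case by (rule vb_eq.sym)
next
  case (trans w w' w'') then have "vb_eq n (v @ w) (v @ w')" "vb_eq n (v @ w') (v @ w'')" by simp_all
  then show ?case by (rule vb_eq.trans)
qed

lemma vb_eq_app: "vb_eq n u u' \<Longrightarrow> vb_eq n v v' \<Longrightarrow> vb_eq n (u @ v) (u' @ v')"
  by (meson vb_eq.trans vb_eq_app_left vb_eq_app_right vb_eq_lists)

lemma vb_eq_ctx: "vb_eq n a b \<Longrightarrow> x \<in> lists (vb_letters n) \<Longrightarrow> y \<in> lists (vb_letters n)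
   \<Longrightarrow> vb_eq n (x @ a @ y) (x @ b @ y)"
  by (simp add: vb_eq.refl vb_eq_app)

lemma class_eqI: "vb_eq n u v \<Longrightarrow> vb_class n u = vb_class n v"
proof -
  assume h: "vb_eq n u v"
  have "vb_eq n u x \<longleftrightarrow> vb_eq n v x" for x
    using h vb_eq.trans[of n u v x] vb_eq.trans[of n v u x] vb_eq.sym[OF h] by blast
  then show ?thesis by (simp add: vb_class_def)
qed

lemma rep_class: "u \<in> lists (vb_letters n) \<Longrightarrow> vb_eq n u (rep (vb_class n u))"
proof -
  assume "u \<in> lists (vb_letters n)"
  then have "vb_eq n u u" by (rule vb_eq.refl)
  then show ?thesis unfolding rep_def vb_class_def mem_Collect_eq by (rule someI)
qed

lemma rep_lists: "u \<in> lists (vb_letters n) \<Longrightarrow> rep (vb_class n u) \<in> lists (vb_letters n)"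
  using rep_class vb_eq_lists by blast

lemma class_rep: "X \<in> carrier (VB n) \<Longrightarrow> vb_class n (rep X) = X \<and> rep X \<in> lists (vb_letters n)"
proof -
  assume "X \<in> carrier (VB n)"
  then obtain w where w: "X = vb_class n w" "w \<in> lists (vb_letters n)" unfolding VB_def by auto
  have "vb_class n (rep X) = X" using class_eqI[OF vb_eq.sym[OF rep_class[OF w(2)]]] w(1) by simp
  moreover have "rep X \<in> lists (vb_letters n)" using rep_lists w by simp
  ultimately show ?thesis by blast
qed

lemma VB_mult: "u \<in> lists (vb_letters n) \<Longrightarrow> v \<in> lists (vb_letters n) \<Longrightarrow>
   vb_class n u \<otimes>\<^bsub>VB n\<^esub> vb_class n v = vb_class n (u @ v)"
proof -
  assume u: "u \<in> lists (vb_letters n)" and v: "v \<in> lists (vb_letters n)"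
  have "vb_eq n (rep (vb_class n u) @ rep (vb_class n v)) (u @ v)"
    by (rule vb_eq_app[OF vb_eq.sym[OF rep_class[OF u]] vb_eq.sym[OF rep_class[OF v]]])
  then show ?thesis unfolding VB_def using class_eqI by simp
qed

lemma VB_carrier: "u \<in> lists (vb_letters n) \<Longrightarrow> vb_class n u \<in> carrier (VB n)"
  unfolding VB_def by simp

lemma VB_one: "\<one>\<^bsub>VB n\<^esub> = vb_class n []"
  unfolding VB_def by simp

definition winv :: "vword \<Rightarrow> vword" where "winv w = rev (map linv w)"

lemma linv_letters: "a \<in> vb_letters n \<Longrightarrow> linv a \<in> vb_letters n"
  by (cases a) (auto simp: vb_letters_def)

lemma winv_lists: "w \<in> lists (vb_letters n) \<Longrightarrow> winv w \<in> lists (vb_letters n)"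
  unfolding winv_def using linv_letters by auto

lemma linv_linv [simp]: "linv (linv a) = a" by (cases a) auto

lemma winv_cancel: "w \<in> lists (vb_letters n) \<Longrightarrow> vb_eq n (winv w @ w) []"
proof (induction w)
  case Nil then show ?case by (auto simp: winv_def intro: vb_eq.refl)
next
  case (Cons a w)
  have a: "a \<in> vb_letters n" "w \<in> lists (vb_letters n)" using Cons by auto
  have "winv (a # w) @ a # w = winv w @ [linv a, linv (linv a)] @ w" by (simp add: winv_def)
  moreover have "vb_eq n (winv w @ [linv a, linv (linv a)] @ w) (winv w @ w)"
    by (rule vb_eq.cancel) (auto simp: a linv_letters winv_lists)
  ultimately show ?case using Cons a by (metis vb_eq.trans)
qed

lemma VB_group: "group (VB n)"
proof (rule groupI)
  fix x y assume "x \<in> carrier (VB n)" "y \<in> carrier (VB n)"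
  then show "x \<otimes>\<^bsub>VB n\<^esub> y \<in> carrier (VB n)"
    by (metis VB_carrier VB_mult append_in_lists_conv class_rep)
next
  show "\<one>\<^bsub>VB n\<^esub> \<in> carrier (VB n)" by (simp add: VB_one VB_carrier)
next
  fix x y z assume "x \<in> carrier (VB n)" "y \<in> carrier (VB n)" "z \<in> carrier (VB n)"
  then show "x \<otimes>\<^bsub>VB n\<^esub> y \<otimes>\<^bsub>VB n\<^esub> z = x \<otimes>\<^bsub>VB n\<^esub> (y \<otimes>\<^bsub>VB n\<^esub> z)"
    by (metis VB_mult append_assoc append_in_lists_conv class_rep)
next
  fix x assume "x \<in> carrier (VB n)"
  then show "\<one>\<^bsub>VB n\<^esub> \<otimes>\<^bsub>VB n\<^esub> x = x"
    by (metis VB_mult VB_one append_Nil class_rep lists.Nil)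
next
  fix x assume x: "x \<in> carrier (VB n)"
  then obtain w where w: "x = vb_class n w" "w \<in> lists (vb_letters n)" using class_rep by metis
  show "\<exists>y\<in>carrier (VB n). y \<otimes>\<^bsub>VB n\<^esub> x = \<one>\<^bsub>VB n\<^esub>"
    by (rule bexI[of _ "vb_class n (winv w)"])
      (use w winv_lists winv_cancel VB_mult VB_one class_eqI VB_carrier in auto)
qed

lemma VB_inv: "w \<in> lists (vb_letters n) \<Longrightarrow> inv\<^bsub>VB n\<^esub> (vb_class n w) = vb_class n (winv w)"
  by (metis VB_carrier VB_group VB_mult VB_one class_eqI group.inv_equality winv_cancel winv_lists)



fun psi :: "vgen \<Rightarrow> nat \<Rightarrow> nat" where
  "psi (Sig i) = id" | "psi (Rho i) = tr i"

definition pe :: "vword \<Rightarrow> nat \<Rightarrow> nat" where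
  "pe w = foldr (\<lambda>(e, g) acc. psi g \<circ> acc) w id"

lemma pe_Nil [simp]: "pe [] = id" by (simp add: pe_def)
lemma pe_Cons [simp]: "pe ((e, g) # w) = psi g \<circ> pe w" by (simp add: pe_def)
lemma pe_append [simp]: "pe (u @ v) = pe u \<circ> pe v"
  by (induction u) (auto simp: pe_def)

lemma tr_invol: "tr i \<circ> tr i = id" by simp

lemma tr_braid: "tr i \<circ> tr (i+1) \<circ> tr i = tr (i+1) \<circ> tr i \<circ> tr (i+1)"
  by (auto simp: fun_eq_iff transpose_def)

lemma tr_comm: "i + 2 \<le> j \<or> j + 2 \<le> i \<Longrightarrow> tr i \<circ> tr j = tr j \<circ> tr i"
  by (auto simp: fun_eq_iff transpose_def)

lemma psi_invol: "psi g \<circ> psi g = id" by (cases g) auto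

lemma pe_relator: "(l, r) \<in> vb_relators n \<Longrightarrow> pe l = pe r"
  unfolding vb_relators_def
  apply (elim UnE; clarsimp simp del: One_nat_def)
  by (auto simp: fun_eq_iff transpose_def)

lemma pe_vb_eq: "vb_eq n u v \<Longrightarrow> pe u = pe v"
proof (induction rule: vb_eq.induct)
  case (rel l r u v) then show ?case using pe_relator by simp
next
  case (cancel a u v) then show ?case
    by (cases a) (simp add: comp_assoc[symmetric] psi_invol)
qed auto

lemma tr_permutes: "1 \<le> i \<Longrightarrow> i < n \<Longrightarrow> tr i permutes {1..n}"
  by (rule permutes_swap_id) auto

lemma psi_permutes: "(e, g) \<in> vb_letters n \<Longrightarrow> psi g permutes {1..n}"
  by (auto simp: vb_letters_def intro!: permutes_swap_id)

lemma pe_permutes: "w \<in> lists (vb_letters n) \<Longrightarrow> pe w permutes {1..n}"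
proof (induction w)
  case (Cons a w)
  obtain e g where a: "a = (e, g)" by (cases a)
  have "psi g permutes {1..n}" using Cons a psi_permutes[of e g n] by auto
  moreover have "pe w permutes {1..n}" using Cons by auto
  ultimately show ?case unfolding a pe_Cons by (rule permutes_compose[rotated])
qed simp

lemma M_group: "group (M n)"
proof (rule groupI)
  fix x y assume "x \<in> carrier (M n)" "y \<in> carrier (M n)"
  then show "x \<otimes>\<^bsub>M n\<^esub> y \<in> carrier (M n)"
    by (auto simp: M_def intro!: permutes_compose permutes_inv)
next
  show "\<one>\<^bsub>M n\<^esub> \<in> carrier (M n)" by (simp add: M_def permutes_id)
next
  fix x y z assume xyz: "x \<in> carrier (M n)" "y \<in> carrier (M n)" "z \<in> carrier (M n)"
  obtain a b c d e f where abc: "x = (a, b)" "y = (c, d)" "z = (e, f)" by (cases x, cases y, cases z)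
  have bij: "bij b" "bij d" using xyz abc by (auto simp: M_def permutes_bij)
  have "inv' (b \<circ> d) = inv' d \<circ> inv' b" using bij by (simp add: o_inv_distrib)
  moreover have hb: "\<And>x. inv' b (b x) = x" using bij by (simp add: bij_is_inj inv_f_f)
  ultimately show "x \<otimes>\<^bsub>M n\<^esub> y \<otimes>\<^bsub>M n\<^esub> z = x \<otimes>\<^bsub>M n\<^esub> (y \<otimes>\<^bsub>M n\<^esub> z)"
    using abc by (simp add: M_def fun_eq_iff)
next
  fix x assume "x \<in> carrier (M n)"
  then show "\<one>\<^bsub>M n\<^esub> \<otimes>\<^bsub>M n\<^esub> x = x" by (auto simp: M_def)
next
  fix x assume x: "x \<in> carrier (M n)"
  obtain a b where ab: "x = (a, b)" by (cases x)
  have p: "a permutes {1..n}" "b permutes {1..n}" using x ab by (auto simp: M_def)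
  have bij: "bij a" "bij b" using p by (auto simp: permutes_bij)
  let ?y = "(inv' b \<circ> inv' a \<circ> b, inv' b)"
  have "?y \<in> carrier (M n)" using p by (auto simp: M_def intro!: permutes_compose permutes_inv)
  moreover have "?y \<otimes>\<^bsub>M n\<^esub> x = \<one>\<^bsub>M n\<^esub>"
  proof -
    have "inv' b \<circ> inv' a \<circ> b \<circ> (inv' b \<circ> a \<circ> inv' (inv' b)) = id"
      using bij by (simp add: fun_eq_iff inv_inv_eq bij_is_surj surj_f_inv_f bij_is_inj inv_f_f)
    moreover have "inv' b \<circ> b = id" using bij by (simp add: bij_is_inj)
    ultimately show ?thesis using ab by (simp add: M_def comp_assoc)
  qed
  ultimately show "\<exists>y\<in>carrier (M n). y \<otimes>\<^bsub>M n\<^esub> x = \<one>\<^bsub>M n\<^esub>" by blast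
qed



lemma chi_gen_carrier: "(e, g) \<in> vb_letters n \<Longrightarrow> chi_gen g \<in> carrier (M n)"
  by (auto simp: vb_letters_def M_def s_el_def t_el_def intro!: permutes_swap_id)

lemma chi_gen_sq: "chi_gen g \<otimes>\<^bsub>M n\<^esub> chi_gen g = \<one>\<^bsub>M n\<^esub>"
  by (cases g) (auto simp: M_def s_el_def t_el_def)

lemma chi_gen_inv: "(e, g) \<in> vb_letters n \<Longrightarrow> inv\<^bsub>M n\<^esub> (chi_gen g) = chi_gen g"
  using group.inv_equality[OF M_group chi_gen_sq chi_gen_carrier chi_gen_carrier] by blast

lemma nu_gen_carrier: "(e, g) \<in> vb_letters n \<Longrightarrow> nu_gen g \<in> carrier (sym_group n)"
  by (auto simp: vb_letters_def sym_group_carrier intro!: permutes_swap_id)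

lemma nu_gen_inv: "(e, g) \<in> vb_letters n \<Longrightarrow> inv\<^bsub>sym_group n\<^esub> (nu_gen g) = nu_gen g"
proof -
  assume l: "(e, g) \<in> vb_letters n"
  have sq: "nu_gen g \<otimes>\<^bsub>sym_group n\<^esub> nu_gen g = \<one>\<^bsub>sym_group n\<^esub>"
    by (cases g) (simp_all add: sym_group_mult sym_group_one)
  show ?thesis by (rule group.inv_equality[OF sym_group_is_group sq nu_gen_carrier[OF l] nu_gen_carrier[OF l]])
qed

lemma word_eval_Cons: "word_eval G f ((e, g) # w) =
   (if e then inv\<^bsub>G\<^esub> (f g) else f g) \<otimes>\<^bsub>G\<^esub> word_eval G f w"
  by (simp add: word_eval_def)

lemma word_eval_Nil: "word_eval G f [] = \<one>\<^bsub>G\<^esub>"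
  by (simp add: word_eval_def)

fun nu' :: "vgen \<Rightarrow> nat \<Rightarrow> nat" where
  "nu' g = nu_gen g"

definition pe2 :: "vword \<Rightarrow> nat \<Rightarrow> nat" where
  "pe2 w = foldr (\<lambda>(e, g) acc. nu_gen g \<circ> acc) w id"

lemma pe2_Cons [simp]: "pe2 ((e, g) # w) = nu_gen g \<circ> pe2 w" by (simp add: pe2_def)
lemma pe2_Nil [simp]: "pe2 [] = id" by (simp add: pe2_def)

lemma eta1_mult: "eta1 (x \<otimes>\<^bsub>M n\<^esub> y) = eta1 x \<circ> eta1 y"
  by (cases x, cases y) (simp add: M_def eta1_def)

lemma eta2_mult: "y \<in> carrier (M n) \<Longrightarrow> x \<in> carrier (M n) \<Longrightarrow> eta2 (x \<otimes>\<^bsub>M n\<^esub> y) = eta2 x \<circ> eta2 y"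
proof -
  assume "x \<in> carrier (M n)"
  obtain a b c d where ab: "x = (a, b)" "y = (c, d)" by (cases x, cases y)
  assume "x \<in> carrier (M n)"
  then have "bij b" using ab by (auto simp: M_def permutes_bij)
  then have "\<And>z. inv' b (b z) = z" by (simp add: bij_is_inj inv_f_f)
  then show ?thesis using ab by (simp add: M_def eta2_def fun_eq_iff)
qed

lemma WM_props: "w \<in> lists (vb_letters n) \<Longrightarrow>
   word_eval (M n) chi_gen w \<in> carrier (M n) \<and>
   eta1 (word_eval (M n) chi_gen w) = pe w \<and>
   eta2 (word_eval (M n) chi_gen w) = pe2 w \<and>
   word_eval (sym_group n) nu_gen w = pe2 w"
proof (induction w)
  case Nil
  have "word_eval (M n) chi_gen [] = (id, id)" by (simp add: word_eval_Nil M_def)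
  moreover have "(id, id) \<in> carrier (M n)" by (simp add: M_def)
  ultimately show ?case by (simp add: word_eval_Nil sym_group_one eta1_def eta2_def)
next
  case (Cons a w)
  obtain e g where a: "a = (e, g)" by (cases a)
  have l: "(e, g) \<in> vb_letters n" "w \<in> lists (vb_letters n)" using Cons a by auto
  have IH: "word_eval (M n) chi_gen w \<in> carrier (M n)" "eta1 (word_eval (M n) chi_gen w) = pe w"
     "eta2 (word_eval (M n) chi_gen w) = pe2 w" "word_eval (sym_group n) nu_gen w = pe2 w"
    using Cons l by auto
  have WM: "word_eval (M n) chi_gen (a # w) = chi_gen g \<otimes>\<^bsub>M n\<^esub> word_eval (M n) chi_gen w"
    unfolding a word_eval_Cons using chi_gen_inv[OF l(1)] by simp
  have WS: "word_eval (sym_group n) nu_gen (a # w) = nu_gen g \<circ> word_eval (sym_group n) nu_gen w"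
    unfolding a word_eval_Cons using nu_gen_inv[OF l(1)] by (simp add: sym_group_mult)
  have e1: "eta1 (chi_gen g) = psi g" by (cases g) (auto simp: eta1_def s_el_def t_el_def)
  have e2: "eta2 (chi_gen g) = nu_gen g" by (cases g) (auto simp: eta2_def s_el_def t_el_def)
  have c: "word_eval (M n) chi_gen (a # w) \<in> carrier (M n)"
    unfolding WM by (rule monoid.m_closed[OF group.is_monoid[OF M_group] chi_gen_carrier[OF l(1)] IH(1)])
  have 1: "eta1 (word_eval (M n) chi_gen (a # w)) = pe (a # w)"
  proof -
    have "eta1 (word_eval (M n) chi_gen (a # w)) = eta1 (chi_gen g) \<circ> eta1 (word_eval (M n) chi_gen w)"
      unfolding WM by (rule eta1_mult)
    then show ?thesis using e1 IH(2) a by simp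
  qed
  have 2: "eta2 (word_eval (M n) chi_gen (a # w)) = pe2 (a # w)"
  proof -
    have "eta2 (word_eval (M n) chi_gen (a # w)) = eta2 (chi_gen g) \<circ> eta2 (word_eval (M n) chi_gen w)"
      unfolding WM by (rule eta2_mult[OF IH(1) chi_gen_carrier[OF l(1)]])
    then show ?thesis using e2 IH(3) a by simp
  qed
  have 3: "word_eval (sym_group n) nu_gen (a # w) = pe2 (a # w)"
    using WS IH(4) a by simp
  show ?case using c 1 2 3 by blast
qed

lemma pe_vb_eq': "vb_eq n u v \<Longrightarrow> pe u = pe v" using pe_vb_eq by blast

definition hh :: "nat \<Rightarrow> vword set \<Rightarrow> nat \<Rightarrow> nat" where "hh n = eta1 \<circ> chi n"

lemma hh_class: "w \<in> lists (vb_letters n) \<Longrightarrow> hh n (vb_class n w) = pe w"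
proof -
  assume w: "w \<in> lists (vb_letters n)"
  have "hh n (vb_class n w) = eta1 (word_eval (M n) chi_gen (rep (vb_class n w)))"
    by (simp add: hh_def chi_def hom_from_gens_def)
  also have "\<dots> = pe (rep (vb_class n w))" using WM_props rep_lists[OF w] by blast
  also have "\<dots> = pe w" using pe_vb_eq rep_class[OF w] by metis
  finally show ?thesis .
qed

lemma hh_hom: "hh n \<in> hom (VB n) (sym_group n)"
proof (rule homI)
  fix x assume "x \<in> carrier (VB n)"
  then obtain w where w: "x = vb_class n w" "w \<in> lists (vb_letters n)" using class_rep by metis
  then show "hh n x \<in> carrier (sym_group n)" using hh_class pe_permutes sym_group_carrier by metis
next
  fix x y assume "x \<in> carrier (VB n)" "y \<in> carrier (VB n)"
  then obtain u v where w: "x = vb_class n u" "u \<in> lists (vb_letters n)"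
     "y = vb_class n v" "v \<in> lists (vb_letters n)" using class_rep by metis
  then show "hh n (x \<otimes>\<^bsub>VB n\<^esub> y) = hh n x \<otimes>\<^bsub>sym_group n\<^esub> hh n y"
    by (simp add: VB_mult hh_class sym_group_mult)
qed

lemma hh_group_hom: "group_hom (VB n) (sym_group n) (hh n)"
  by (simp add: group_hom_def group_hom_axioms_def VB_group sym_group_is_group hh_hom)

lemma H_sub_kernel: "H_sub n \<subseteq> kernel (VB n) (sym_group n) (hh n)"
proof -
  have "kernel (VB n) (sym_group n) (hh n) \<lhd> VB n"
    using group_hom.normal_kernel[OF hh_group_hom] .
  moreover have "{vsigma n i | i. 1 \<le> i \<and> i < n} \<subseteq> kernel (VB n) (sym_group n) (hh n)"
  proof
    fix x assume "x \<in> {vsigma n i | i. 1 \<le> i \<and> i < n}"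
    then obtain i where i: "x = vsigma n i" "1 \<le> i" "i < n" by blast
    have l: "sg i \<in> lists (vb_letters n)" using sig_letter i by auto
    show "x \<in> kernel (VB n) (sym_group n) (hh n)"
      unfolding kernel_def using i l VB_carrier hh_class[OF l]
      by (simp add: vsigma_def sym_group_one)
  qed
  ultimately show ?thesis unfolding H_sub_def normal_closure_def by blast
qed



definition rw :: "nat list \<Rightarrow> vword" where "rw xs = map (\<lambda>i. (False, Rho i)) xs"
definition pr :: "nat list \<Rightarrow> nat \<Rightarrow> nat" where "pr xs = foldr (\<lambda>i acc. tr i \<circ> acc) xs id"

lemma rw_append [simp]: "rw (xs @ ys) = rw xs @ rw ys" by (simp add: rw_def)
lemma rw_Nil [simp]: "rw [] = []" by (simp add: rw_def)
lemma rw_Cons: "rw (x # xs) = (False, Rho x) # rw xs" by (simp add: rw_def)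
lemma pr_append [simp]: "pr (xs @ ys) = pr xs \<circ> pr ys" by (induction xs) (auto simp: pr_def)
lemma pr_Nil [simp]: "pr [] = id" by (simp add: pr_def)
lemma pr_Cons [simp]: "pr (x # xs) = tr x \<circ> pr xs" by (simp add: pr_def)
lemma pe_rw: "pe (rw xs) = pr xs" by (induction xs) (auto simp: rw_def)

lemma rw_lists: "set xs \<subseteq> {1..<n} \<Longrightarrow> rw xs \<in> lists (vb_letters n)"
  by (auto simp: rw_def subset_iff intro!: rho_letter)

lemma rel0: "(l, r) \<in> vb_relators n \<Longrightarrow> vb_eq n l r"
  using vb_eq.rel[of l r n "[]" "[]"] by simp

lemma R_sq: "1 \<le> i \<Longrightarrow> i < n \<Longrightarrow> vb_eq n (rw [i, i]) (rw [])"
  by (rule rel0) (auto simp: vb_relators_def rw_def)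

lemma R_comm: "1 \<le> i \<Longrightarrow> i < n \<Longrightarrow> 1 \<le> j \<Longrightarrow> j < n \<Longrightarrow> i + 2 \<le> j \<or> j + 2 \<le> i
   \<Longrightarrow> vb_eq n (rw [i, j]) (rw [j, i])"
proof -
  assume "1 \<le> i" "i < n" "1 \<le> j" "j < n" "i + 2 \<le> j \<or> j + 2 \<le> i"
  then have "(rw [i, j], rw [j, i]) \<in> {(rh i @ rh j, rh j @ rh i) |i j.
           1 \<le> i \<and> i < n \<and> 1 \<le> j \<and> j < n \<and> (i + 2 \<le> j \<or> j + 2 \<le> i)}"
    by (auto simp: rw_def)
  then show ?thesis by (intro rel0) (auto simp: vb_relators_def)
qed

lemma R_braid: "1 \<le> i \<Longrightarrow> i + 1 < n \<Longrightarrow> vb_eq n (rw [i, i+1, i]) (rw [i+1, i, i+1])"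
proof -
  assume "1 \<le> i" "i + 1 < n"
  then have "(rw [i, i+1, i], rw [i+1, i, i+1]) \<in> {(rh i @ rh (i+1) @ rh i, rh (i+1) @ rh i @ rh (i+1)) | i. 1 \<le> i \<and> i + 1 < n}"
    by (auto simp: rw_def)
  then show ?thesis by (intro rel0) (auto simp: vb_relators_def)
qed

lemma ctx: "vb_eq n (rw a) (rw b) \<Longrightarrow> set x \<subseteq> {1..<n} \<Longrightarrow> set y \<subseteq> {1..<n}
   \<Longrightarrow> vb_eq n (rw (x @ a @ y)) (rw (x @ b @ y))"
  using vb_eq_ctx[of n "rw a" "rw b" "rw x" "rw y"] rw_lists by simp

lemma comm_past: "\<forall>j\<in>set ys. i + 2 \<le> j \<or> j + 2 \<le> i \<Longrightarrow> 1 \<le> i \<Longrightarrow> i < n \<Longrightarrow> set ys \<subseteq> {1..<n}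
   \<Longrightarrow> vb_eq n (rw (ys @ [i])) (rw (i # ys))"
proof (induction ys)
  case Nil
  then show ?case using vb_eq.refl[OF rw_lists[of "[i]" n]] by simp
next
  case (Cons y ys)
  have 1: "vb_eq n (rw ([y] @ (ys @ [i]) @ [])) (rw ([y] @ (i # ys) @ []))"
    by (rule ctx) (use Cons in auto)
  have 2: "vb_eq n (rw ([] @ [y, i] @ ys)) (rw ([] @ [i, y] @ ys))"
    by (rule ctx) (use Cons R_comm[of y n i] in auto)
  have a1: "vb_eq n (rw (y # ys @ [i])) (rw (y # i # ys))" using 1 by simp
  have a2: "vb_eq n (rw (y # i # ys)) (rw (i # y # ys))" using 2 by (simp add: rw_def)
  from vb_eq.trans[OF a1 a2] show ?case by simp
qed

lemma vtrans: "vb_eq n a b \<Longrightarrow> vb_eq n b c \<Longrightarrow> vb_eq n a c" by (rule vb_eq.trans)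

lemma NF: "1 \<le> m \<Longrightarrow> m \<le> n \<Longrightarrow> set xs \<subseteq> {1..<m} \<Longrightarrow>
  \<exists>u k. set u \<subseteq> {1..<m-1} \<and> 1 \<le> k \<and> k \<le> m \<and> vb_eq n (rw xs) (rw (u @ rev [k..<m]))"
proof (induction xs rule: rev_induct)
  case Nil
  show ?case by (rule exI[of _ "[]"], rule exI[of _ m]) (use Nil vb_eq.refl[of "[]" n] in auto)
next
  case (snoc i xs)
  then obtain u k where uk: "set u \<subseteq> {1..<m-1}" "1 \<le> k" "k \<le> m"
    "vb_eq n (rw xs) (rw (u @ rev [k..<m]))" by auto
  have i: "1 \<le> i" "i < m" using snoc by auto
  have un: "set u \<subseteq> {1..<n}" using uk(1) snoc.prems(2) by (auto simp: subset_iff)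
  have Dn: "set (rev [k..<m]) \<subseteq> {1..<n}" using uk(2) snoc.prems(2) by (auto simp: subset_iff)
  have s1: "vb_eq n (rw (xs @ [i])) (rw (u @ rev [k..<m] @ [i]))"
    using vb_eq_app_right[OF uk(4) rw_lists[of "[i]" n]] i snoc by simp
  consider "i + 1 < k" | "i + 1 = k" | "i = k" | "k < i" by linarith
  then show ?case
  proof cases
    case 1
    have "vb_eq n (rw (u @ (rev [k..<m] @ [i]) @ [])) (rw (u @ (i # rev [k..<m]) @ []))"
      by (rule ctx[OF comm_past]) (use 1 un Dn i snoc in auto)
    then have "vb_eq n (rw (xs @ [i])) (rw ((u @ [i]) @ rev [k..<m]))"
      using vtrans[OF s1] by simp
    moreover have "set (u @ [i]) \<subseteq> {1..<m-1}" using uk 1 i by auto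
    ultimately show ?thesis using uk by blast
  next
    case 2
    have "rev [k..<m] @ [i] = rev [i..<m]" using 2 i by (simp add: upt_conv_Cons)
    then show ?thesis using s1 uk i by (intro exI[of _ u] exI[of _ i]) auto
  next
    case 3
    have e: "rev [k..<m] @ [i] = rev [k+1..<m] @ [k, k]" using 3 i by (simp add: upt_conv_Cons)
    have "vb_eq n (rw ((u @ rev [k+1..<m]) @ [k, k] @ [])) (rw ((u @ rev [k+1..<m]) @ [] @ []))"
      by (rule ctx[OF R_sq]) (use un Dn i 3 snoc.prems in \<open>auto simp: subset_iff\<close>)
    then have "vb_eq n (rw (xs @ [i])) (rw (u @ rev [k+1..<m]))"
      using vtrans[OF s1] e by simp
    then show ?thesis using uk i 3 by (intro exI[of _ u] exI[of _ "k+1"]) auto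
  next
    case 4
    define j where "j = i - 1"
    have j: "i = j + 1" "k \<le> j" "j + 1 < m" using 4 i unfolding j_def by auto
    define A where "A = rev [j+2..<m]"
    define B where "B = rev [k..<j]"
    have eq: "rev [k..<m] = A @ [j+1, j] @ B"
    proof -
      have "[k..<m] = [k..<j] @ [j..<m]" using j upt_add_eq_append[of k j "m - j"] by simp
      moreover have "[j..<m] = j # (j+1) # [j+2..<m]" using j by (simp add: upt_conv_Cons)
      ultimately show ?thesis unfolding A_def B_def by simp
    qed
    have An: "set A \<subseteq> {1..<n}" "\<forall>x\<in>set A. j + 2 \<le> x" using j uk snoc.prems
      unfolding A_def by (auto simp: subset_iff)
    have Bn: "set B \<subseteq> {1..<n}" "\<forall>x\<in>set B. x + 2 \<le> j + 1" using j uk snoc.prems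
      unfolding B_def by (auto simp: subset_iff)
    have jn: "1 \<le> j" "j + 1 < n" using j uk snoc.prems by auto
    have S1: "vb_eq n (rw ((u @ A @ [j+1, j]) @ (B @ [j+1]) @ [])) (rw ((u @ A @ [j+1, j]) @ ((j+1) # B) @ []))"
      by (rule ctx[OF comm_past]) (use Bn jn un An in \<open>auto simp: subset_iff\<close>)
    have S2: "vb_eq n (rw ((u @ A) @ [j+1, j, j+1] @ B)) (rw ((u @ A) @ [j, j+1, j] @ B))"
      by (rule ctx[OF vb_eq.sym[OF R_braid]]) (use Bn jn un An in \<open>auto simp: subset_iff\<close>)
    have S3: "vb_eq n (rw (u @ (A @ [j]) @ [j+1, j] @ B)) (rw (u @ (j # A) @ [j+1, j] @ B))"
      by (rule ctx[OF comm_past]) (use Bn jn un An in \<open>auto simp: subset_iff\<close>)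
    have T1: "vb_eq n (rw (u @ A @ [j+1, j] @ B @ [j+1])) (rw (u @ A @ [j+1,j,j+1] @ B))"
      using S1 by simp
    have T2: "vb_eq n (rw (u @ A @ [j+1,j,j+1] @ B)) (rw (u @ A @ [j, j+1, j] @ B))"
      using S2 by simp
    have T3: "vb_eq n (rw (u @ A @ [j, j+1, j] @ B)) (rw (u @ j # A @ [j+1, j] @ B))"
      using S3 by simp
    have "vb_eq n (rw (u @ rev [k..<m] @ [i])) (rw ((u @ [j]) @ rev [k..<m]))"
      using vtrans[OF vtrans[OF T1 T2] T3] unfolding eq j(1) by simp
    then have "vb_eq n (rw (xs @ [i])) (rw ((u @ [j]) @ rev [k..<m]))"
      using vtrans[OF s1] by simp
    moreover have "set (u @ [j]) \<subseteq> {1..<m-1}" using uk j jn by auto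
    ultimately show ?thesis using uk by blast
  qed
qed



lemma pr_D: "k \<le> m \<Longrightarrow> pr (rev [k..<m]) k = m"
proof (induction "m - k" arbitrary: k)
  case 0 then show ?case by simp
next
  case (Suc d)
  then have "k < m" by simp
  then have "rev [k..<m] = rev [Suc k..<m] @ [k]" by (simp add: upt_conv_Cons)
  then show ?case using Suc by simp
qed

lemma pr_fix: "set u \<subseteq> {1..<m-1} \<Longrightarrow> pr u m = m"
  by (induction u) (auto simp: transpose_def)

lemma cox: "m \<le> n \<Longrightarrow> set xs \<subseteq> {1..<m} \<Longrightarrow> pr xs = id \<Longrightarrow> vb_eq n (rw xs) []"
proof (induction m arbitrary: xs)
  case 0
  then have "xs = []" by auto
  then show ?case using vb_eq.refl[of "[]" n] by simp
next
  case (Suc m)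
  obtain u k where uk: "set u \<subseteq> {1..<Suc m - 1}" "1 \<le> k" "k \<le> Suc m"
    "vb_eq n (rw xs) (rw (u @ rev [k..<Suc m]))"
    using NF[of "Suc m" n xs] Suc.prems by auto
  have "pr xs = pr (u @ rev [k..<Suc m])" using pe_vb_eq[OF uk(4)] unfolding pe_rw .
  then have p: "pr (u @ rev [k..<Suc m]) = id" using Suc.prems(3) by metis
  have "k = Suc m"
  proof (rule ccontr)
    assume "k \<noteq> Suc m"
    have "pr (u @ rev [k..<Suc m]) k = Suc m"
      using pr_D[OF uk(3)] pr_fix[OF uk(1)] by simp
    then show False using p \<open>k \<noteq> Suc m\<close> by (metis id_apply)
  qed
  then have "vb_eq n (rw xs) (rw u)" "pr u = id" using uk p by auto
  moreover have "vb_eq n (rw u) []" using Suc.IH[of u] Suc.prems uk(1) \<open>pr u = id\<close> by auto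
  ultimately show ?case by (meson vb_eq.trans)
qed

fun isR :: "vgen \<Rightarrow> bool" where "isR (Sig i) = False" | "isR (Rho i) = True"

definition delS :: "vword \<Rightarrow> vword" where "delS w = filter (\<lambda>(e, g). isR g) w"

lemma rho_inv: "1 \<le> i \<Longrightarrow> i < n \<Longrightarrow> vb_eq n [(e, Rho i)] [(False, Rho i)]"
proof (cases e)
  case True
  assume i: "1 \<le> i" "i < n"
  have l: "(True, Rho i) \<in> vb_letters n" "(False, Rho i) \<in> vb_letters n" using i rho_letter by auto
  have "vb_eq n ([(True, Rho i)] @ rw [] @ []) ([(True, Rho i)] @ rw [i, i] @ [])"
    by (rule vb_eq_ctx[OF vb_eq.sym[OF R_sq[OF i]]]) (use l in auto)
  moreover have "vb_eq n ([] @ [(True, Rho i), linv (True, Rho i)] @ [(False, Rho i)]) ([] @ [(False, Rho i)])"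
    by (rule vb_eq.cancel) (use l in auto)
  ultimately show ?thesis using True vb_eq.trans by (simp add: rw_def)
next
  case False
  assume i: "1 \<le> i" "i < n"
  show ?thesis using False vb_eq.refl[of "[(False, Rho i)]" n] rho_letter[OF i] by auto
qed

lemma rho_word: "w \<in> lists (vb_letters n) \<Longrightarrow> \<forall>(e, g)\<in>set w. isR g \<Longrightarrow>
  \<exists>xs. set xs \<subseteq> {1..<n} \<and> vb_eq n w (rw xs)"
proof (induction w)
  case Nil
  then show ?case using vb_eq.refl[of "[]" n] by (intro exI[of _ "[]"]) auto
next
  case (Cons a w)
  obtain e g where a: "a = (e, g)" by (cases a)
  then obtain i where g: "g = Rho i" using Cons.prems by (cases g) auto
  have i: "1 \<le> i" "i < n" using Cons.prems a g by (auto simp: vb_letters_def)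
  obtain xs where xs: "set xs \<subseteq> {1..<n}" "vb_eq n w (rw xs)" using Cons by auto
  have "vb_eq n ([(e, Rho i)] @ w) ([(False, Rho i)] @ rw xs)"
    by (rule vb_eq_app[OF rho_inv[OF i] xs(2)])
  then show ?case using a g i xs by (intro exI[of _ "i # xs"]) (auto simp: rw_def)
qed

lemma pe_delS: "pe (delS w) = pe w"
proof (induction w)
  case (Cons a w)
  obtain e g where a: "a = (e, g)" by (cases a)
  then show ?case using Cons by (cases g) (auto simp: delS_def)
qed (simp add: delS_def)

lemma delS_lists: "w \<in> lists (vb_letters n) \<Longrightarrow> delS w \<in> lists (vb_letters n)"
  by (auto simp: delS_def)

lemma delS_isR: "\<forall>(e, g)\<in>set (delS w). isR g"
  by (auto simp: delS_def)



lemma step_del: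
  assumes N: "N \<lhd> VB n" and A: "vb_class n [a] \<in> N" and a: "a \<in> vb_letters n"
    and u: "u \<in> lists (vb_letters n)" and v: "v \<in> lists (vb_letters n)"
  shows "vb_class n (u @ [a] @ v) \<in> N \<longleftrightarrow> vb_class n (u @ v) \<in> N"
proof -
  interpret G: group "VB n" by (rule VB_group)
  have sN: "subgroup N (VB n)" using N by (rule normal_imp_subgroup)
  define U where "U = vb_class n u"
  define A' where "A' = vb_class n [a]"
  define V where "V = vb_class n v"
  have c: "U \<in> carrier (VB n)" "A' \<in> carrier (VB n)" "V \<in> carrier (VB n)"
    unfolding U_def A'_def V_def using u v a VB_carrier by auto
  have e1: "vb_class n (u @ [a] @ v) = U \<otimes>\<^bsub>VB n\<^esub> (A' \<otimes>\<^bsub>VB n\<^esub> V)"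
    unfolding U_def A'_def V_def using VB_mult u v a by simp
  have e2: "vb_class n (u @ v) = U \<otimes>\<^bsub>VB n\<^esub> V"
    unfolding U_def V_def using VB_mult u v by simp
  define P where "P = U \<otimes>\<^bsub>VB n\<^esub> A' \<otimes>\<^bsub>VB n\<^esub> inv\<^bsub>VB n\<^esub> U"
  have P: "P \<in> N" unfolding P_def A'_def by (rule normal.inv_op_closed2[OF N c(1) A])
  have Pc: "P \<in> carrier (VB n)" by (rule subgroup.mem_carrier[OF sN P])
  have iU: "inv\<^bsub>VB n\<^esub> U \<in> carrier (VB n)" using c(1) by (rule G.inv_closed)
  have iu: "inv\<^bsub>VB n\<^esub> U \<otimes>\<^bsub>VB n\<^esub> (U \<otimes>\<^bsub>VB n\<^esub> V) = V"
  proof -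
    have "inv\<^bsub>VB n\<^esub> U \<otimes>\<^bsub>VB n\<^esub> (U \<otimes>\<^bsub>VB n\<^esub> V) = (inv\<^bsub>VB n\<^esub> U \<otimes>\<^bsub>VB n\<^esub> U) \<otimes>\<^bsub>VB n\<^esub> V"
      using G.m_assoc[OF iU c(1) c(3)] by simp
    also have "\<dots> = V" using G.l_inv[OF c(1)] G.l_one[OF c(3)] by simp
    finally show ?thesis .
  qed
  have UA: "U \<otimes>\<^bsub>VB n\<^esub> A' \<in> carrier (VB n)" using G.m_closed[OF c(1) c(2)] .
  have e3: "U \<otimes>\<^bsub>VB n\<^esub> (A' \<otimes>\<^bsub>VB n\<^esub> V) = P \<otimes>\<^bsub>VB n\<^esub> (U \<otimes>\<^bsub>VB n\<^esub> V)"
  proof -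
    have "P \<otimes>\<^bsub>VB n\<^esub> (U \<otimes>\<^bsub>VB n\<^esub> V) = (U \<otimes>\<^bsub>VB n\<^esub> A') \<otimes>\<^bsub>VB n\<^esub> (inv\<^bsub>VB n\<^esub> U \<otimes>\<^bsub>VB n\<^esub> (U \<otimes>\<^bsub>VB n\<^esub> V))"
      unfolding P_def using G.m_assoc[OF UA iU G.m_closed[OF c(1) c(3)]] .
    also have "\<dots> = (U \<otimes>\<^bsub>VB n\<^esub> A') \<otimes>\<^bsub>VB n\<^esub> V" using iu by simp
    also have "\<dots> = U \<otimes>\<^bsub>VB n\<^esub> (A' \<otimes>\<^bsub>VB n\<^esub> V)" using G.m_assoc[OF c(1) c(2) c(3)] .
    finally show ?thesis by simp
  qed
  have Q: "U \<otimes>\<^bsub>VB n\<^esub> V \<in> carrier (VB n)" using c by simp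
  have "P \<otimes>\<^bsub>VB n\<^esub> Q' \<in> N \<longleftrightarrow> Q' \<in> N" if q: "Q' \<in> carrier (VB n)" for Q'
  proof
    assume "P \<otimes>\<^bsub>VB n\<^esub> Q' \<in> N"
    then have "inv\<^bsub>VB n\<^esub> P \<otimes>\<^bsub>VB n\<^esub> (P \<otimes>\<^bsub>VB n\<^esub> Q') \<in> N"
      using subgroup.m_closed[OF sN subgroup.m_inv_closed[OF sN P]] by blast
    moreover have "inv\<^bsub>VB n\<^esub> P \<otimes>\<^bsub>VB n\<^esub> (P \<otimes>\<^bsub>VB n\<^esub> Q') = Q'"
      using G.m_assoc[OF G.inv_closed[OF Pc] Pc q, symmetric] G.l_inv[OF Pc] G.l_one[OF q] by simp
    ultimately show "Q' \<in> N" by simp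
  next
    assume "Q' \<in> N"
    then show "P \<otimes>\<^bsub>VB n\<^esub> Q' \<in> N" using subgroup.m_closed[OF sN P] by blast
  qed
  then show ?thesis using e1 e2 e3 Q by simp
qed

lemma sig_in_N:
  assumes N: "N \<lhd> VB n" and S: "{vsigma n i | i. 1 \<le> i \<and> i < n} \<subseteq> N"
    and a: "(e, Sig i) \<in> vb_letters n"
  shows "vb_class n [(e, Sig i)] \<in> N"
proof -
  have i: "1 \<le> i" "i < n" using a unfolding vb_letters_def by auto
  have m: "vsigma n i \<in> {vsigma n i | i. 1 \<le> i \<and> i < n}" using i by blast
  have f: "vb_class n [(False, Sig i)] \<in> N" using subsetD[OF S m] unfolding vsigma_def .
  show ?thesis
  proof (cases e)
    case True
    have "vb_class n [(True, Sig i)] = inv\<^bsub>VB n\<^esub> (vb_class n [(False, Sig i)])"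
      using VB_inv[of "[(False, Sig i)]" n] sig_letter[OF i] by (simp add: winv_def)
    then show ?thesis using True f subgroup.m_inv_closed[OF normal_imp_subgroup[OF N]] by simp
  next
    case False then show ?thesis using f by simp
  qed
qed

lemma del_N:
  assumes N: "N \<lhd> VB n" and S: "{vsigma n i | i. 1 \<le> i \<and> i < n} \<subseteq> N"
  shows "w \<in> lists (vb_letters n) \<Longrightarrow> u \<in> lists (vb_letters n) \<Longrightarrow>
    vb_class n (u @ w) \<in> N \<longleftrightarrow> vb_class n (u @ delS w) \<in> N"
proof (induction w arbitrary: u)
  case Nil then show ?case by (simp add: delS_def)
next
  case (Cons a w)
  obtain e g where a: "a = (e, g)" by (cases a)
  have l: "a \<in> vb_letters n" "w \<in> lists (vb_letters n)" using Cons by auto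
  show ?case
  proof (cases g)
    case (Sig i)
    have "vb_class n (u @ [a] @ w) \<in> N \<longleftrightarrow> vb_class n (u @ w) \<in> N"
      by (rule step_del[OF N]) (use sig_in_N[OF N S] a Sig l Cons.prems in auto)
    moreover have "delS (a # w) = delS w" using a Sig by (simp add: delS_def)
    ultimately show ?thesis using Cons.IH[OF l(2) Cons.prems(2)] by simp
  next
    case (Rho i)
    have "delS (a # w) = a # delS w" using a Rho by (simp add: delS_def)
    then show ?thesis using Cons.IH[of "u @ [a]"] l Cons.prems by simp
  qed
qed

lemma kernel_H: "kernel (VB n) (sym_group n) (hh n) \<subseteq> H_sub n"
proof
  fix x assume x: "x \<in> kernel (VB n) (sym_group n) (hh n)"
  then have xc: "x \<in> carrier (VB n)" and hx: "hh n x = id" by (auto simp: kernel_def sym_group_one)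
  define w where "w = rep x"
  have w: "vb_class n w = x" "w \<in> lists (vb_letters n)" using class_rep[OF xc] w_def by auto
  have pw: "pe w = id" using hh_class[OF w(2)] hx w(1) by simp
  obtain xs where xs: "set xs \<subseteq> {1..<n}" "vb_eq n (delS w) (rw xs)"
    using rho_word[OF delS_lists[OF w(2)] delS_isR] by blast
  have "pr xs = id" using pe_vb_eq[OF xs(2)] pe_delS pw by (simp add: pe_rw)
  then have "vb_eq n (rw xs) []" using cox[of n n xs] xs(1) by simp
  then have dc: "vb_class n (delS w) = \<one>\<^bsub>VB n\<^esub>"
    using class_eqI vb_eq.trans[OF xs(2)] VB_one by metis
  show "x \<in> H_sub n" unfolding H_sub_def normal_closure_def
  proof
    fix N assume "N \<in> {N. N \<lhd> VB n \<and> {vsigma n i |i. 1 \<le> i \<and> i < n} \<subseteq> N}"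
    then have N: "N \<lhd> VB n" and S: "{vsigma n i |i. 1 \<le> i \<and> i < n} \<subseteq> N" by auto
    have "\<one>\<^bsub>VB n\<^esub> \<in> N" using subgroup.one_closed[OF normal_imp_subgroup[OF N]] .
    then have "vb_class n ([] @ delS w) \<in> N" using dc by simp
    then have "vb_class n ([] @ w) \<in> N" using del_N[OF N S w(2) lists.Nil] by simp
    then show "x \<in> N" using w by simp
  qed
qed

theorem proposition7p3:
  fixes n :: nat
  shows "H_sub n = kernel (VB n) (sym_group n) (eta1 \<circ> chi n)
       \<and> VP n = kernel (VB n) (sym_group n) (eta2 \<circ> chi n)
       \<and> H_sub n \<inter> VP n = kernel (VB n) (M n) (chi n)"
proof -
  have i: "H_sub n = kernel (VB n) (sym_group n) (eta1 \<circ> chi n)"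
    using H_sub_kernel kernel_H unfolding hh_def by blast
  have nu_eq: "nu n x = eta2 (chi n x)" if x: "x \<in> carrier (VB n)" for x
  proof -
    have r: "rep x \<in> lists (vb_letters n)" using class_rep[OF x] by blast
    show ?thesis using WM_props[OF r] unfolding nu_def chi_def hom_from_gens_def by simp
  qed
  have ii: "VP n = kernel (VB n) (sym_group n) (eta2 \<circ> chi n)"
    unfolding VP_def kernel_def using nu_eq by auto
  have iii: "kernel (VB n) (sym_group n) (eta1 \<circ> chi n) \<inter> kernel (VB n) (sym_group n) (eta2 \<circ> chi n)
     = kernel (VB n) (M n) (chi n)"
  proof -
    have key1: "eta1 p = id \<Longrightarrow> eta2 p = id \<Longrightarrow> p = (id, id)" for p :: "(nat \<Rightarrow> nat) \<times> (nat \<Rightarrow> nat)"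
      by (cases p) (auto simp: eta1_def eta2_def)
    have key2: "eta1 (id, id) = id" "eta2 (id, id) = id" by (auto simp: eta1_def eta2_def)
    have one: "\<one>\<^bsub>M n\<^esub> = (id, id)" by (simp add: M_def)
    show ?thesis unfolding kernel_def
      by (auto simp: sym_group_one one key2 intro: key1)
  qed
  show ?thesis using i ii iii by simp
qed

end
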